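(* Assume $abcd\neq0$. If $\omega\notin\partial B$, then \[\mathcal{E}_M(\omega)=\frac{1}{|a|^2+|b|^2{\zeta'_M}^2}\left\{M|a|^2+\frac{|b|^2}{4(x^2-1)}\Big({\zeta'_{M+1}}^2-{\zeta'_{M-1}}^2-4M\Big)\right\},\qquad x=x(\omega)\] (here $4(x^2-1)=(\lambda_+-\lambda_-)^2$ where $\lambda_\pm$ are the roots of $\lambda^2-2x\lambda+1=0$). If $\omega_*\in\partial B$, then \[\mathcal{E}_M(\omega_* )=\frac{M}{3}\cdot\frac{3|a|^2+|b|^2+2|b|^2M^2}{|a|^2+|b|^2M^2},\] and $\mathcal{E}_M$, as a function of $\omega$ on the unit circle, is continuous at every $\omega_*\in\partial B$.
   Context: Setting: $M\ge1$, $C=\begin{bmatrix} a&b\\ c&d\end{bmatrix}$ a $2\times2$ unitary matrix, $\Delta=\det C$; $|L\rangle=(1,0)^\top$, $|R\rangle=(0,1)^\top$; $\Gamma_M=\{0,\dots,M-1\}$. $E_M$ is the linear map on $\ell^2(\Gamma_M;\mathbb{C}^2)$ with $(E_M\varphi)(x)=P\varphi(x+1)+Q\varphi(x-1)$, $\varphi(-1)=\varphi(M)=0$, $P=\begin{bmatrix} a&b\\0&0\end{bmatrix}$, $Q=\begin{bmatrix}0&0\\c&d\end{bmatrix}$. For $\xi\in\mathbb{R}$, $z=e^{-i\xi}$, let $\varphi$ be the unique solution of $(z-E_M)\varphi=\delta_0|R\rangle$. Fix a square root $\Delta^{1/2}$ and set $\omega=\Delta^{-1/2}z$ (on the unit circle);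 the energy is $\mathcal{E}_M(\omega)=\sum_{n=0}^{M-1}\|\varphi(n)\|^2_{\mathbb{C}^2}$. Put $x(\omega)=\frac{\omega+\omega^{-1}}{2|a|}$, $\zeta'_m=U_{m-1}(x(\omega))$ with $U_m$ the Chebyshev polynomials of the second kind ($U_{-1}=0$, $U_0=1$, $U_{m+1}(t)=2tU_m(t)-U_{m-1}(t)$), and $\partial B=\{\omega:|x(\omega)|=1\}$. *)

theory Defs
  imports "HOL-Analysis.Analysis"
begin

text \<open>Coin matrix C = [[a,b],[c,d]] is unitary: C^* C = I (entrywise).\<close>
definition unitary2 :: "complex \<Rightarrow> complex \<Rightarrow> complex \<Rightarrow> complex \<Rightarrow> bool" where
  "unitary2 a b c d \<longleftrightarrow>
     cnj a * a + cnj c * c = 1 \<and> cnj b * b + cnj d * d = 1 \<and> cnj a * b + cnj c * d = 0"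

text \<open>Elements of l2(Gamma_M; C^2) as functions on int (pairs = (L-component, R-component)),
  vanishing outside {0..M-1}; this encodes the boundary condition phi(-1) = phi(M) = 0.\<close>
definition lattice_fun :: "nat \<Rightarrow> (int \<Rightarrow> complex \<times> complex) \<Rightarrow> bool" where
  "lattice_fun M \<phi> \<longleftrightarrow> (\<forall>x. (x < 0 \<or> x \<ge> int M) \<longrightarrow> \<phi> x = (0, 0))"

definition Eop :: "nat \<Rightarrow> complex \<Rightarrow> complex \<Rightarrow> complex \<Rightarrow> complex
    \<Rightarrow> (int \<Rightarrow> complex \<times> complex) \<Rightarrow> int \<Rightarrow> complex \<times> complex" where
  "Eop M a b c d \<phi> x =
     (if 0 \<le> x \<and> x < int M
      then (a * fst (\<phi> (x + 1)) + b * snd (\<phi> (x + 1)),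
            c * fst (\<phi> (x - 1)) + d * snd (\<phi> (x - 1)))
      else (0, 0))"

definition is_sol :: "nat \<Rightarrow> complex \<Rightarrow> complex \<Rightarrow> complex \<Rightarrow> complex \<Rightarrow> complex
    \<Rightarrow> (int \<Rightarrow> complex \<times> complex) \<Rightarrow> bool" where
  "is_sol M a b c d z \<phi> \<longleftrightarrow> lattice_fun M \<phi> \<and>
     (\<forall>x \<in> {0..<int M}.
        z * fst (\<phi> x) - fst (Eop M a b c d \<phi> x) = 0 \<and>
        z * snd (\<phi> x) - snd (Eop M a b c d \<phi> x) = (if x = 0 then 1 else 0))"

definition energy :: "nat \<Rightarrow> complex \<Rightarrow> complex \<Rightarrow> complex \<Rightarrow> complex \<Rightarrow> complex \<Rightarrow> real" where
  "energy M a b c d z =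
     (let \<phi> = (THE \<phi>. is_sol M a b c d z \<phi>)
      in \<Sum>n\<in>{0..<int M}. (cmod (fst (\<phi> n)))\<^sup>2 + (cmod (snd (\<phi> n)))\<^sup>2)"

fun chebU :: "nat \<Rightarrow> complex \<Rightarrow> complex" where
  "chebU 0 t = 1"
| "chebU (Suc 0) t = 2 * t"
| "chebU (Suc (Suc n)) t = 2 * t * chebU (Suc n) t - chebU n t"

definition zetap :: "nat \<Rightarrow> complex \<Rightarrow> complex" where
  "zetap m t = (if m = 0 then 0 else chebU (m - 1) t)"

definition xw :: "complex \<Rightarrow> complex \<Rightarrow> complex" where
  "xw a \<omega> = (\<omega> + inverse \<omega>) / (2 * of_real (cmod a))"

definition dB :: "complex \<Rightarrow> complex set" where
  "dB a = {\<omega>. cmod (xw a \<omega>) = 1}"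

end

theory Submission
  imports Defs
begin
lemma unit_facts:
  assumes u: "unitary2 a b c d" and nz: "a * b * c * d \<noteq> 0" and s: "s\<^sup>2 = a * d - b * c"
  shows "c = - (s\<^sup>2) * cnj b" "d = s\<^sup>2 * cnj a" "(cmod a)\<^sup>2 + (cmod b)\<^sup>2 = 1" "cmod s = 1"
proof -
  have h1: "cnj a * a + cnj c * c = 1" and h2: "cnj b * b + cnj d * d = 1" and h3: "cnj a * b + cnj c * d = 0"
    using u by (auto simp: unitary2_def)
  have h3': "a * cnj b + c * cnj d = 0" using arg_cong[OF h3, of cnj] by simp
  show dd: "d = s\<^sup>2 * cnj a" unfolding s using h1 h3 by algebra
  show cc: "c = - (s\<^sup>2) * cnj b" unfolding s using h2 h3' by algebra
  have "s\<^sup>2 \<noteq> 0" using nz dd by auto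
  moreover have "s\<^sup>2 = s\<^sup>2 * (a * cnj a + b * cnj b)" using s dd cc by (simp add: algebra_simps)
  ultimately have ab: "a * cnj a + b * cnj b = 1" by simp
  then show ab2: "(cmod a)\<^sup>2 + (cmod b)\<^sup>2 = 1"
    by (metis complex_norm_square of_real_add of_real_eq_1_iff)
  have "cmod c = cmod s ^ 2 * cmod b" using cc by (simp add: norm_mult norm_power)
  moreover have "(cmod a)\<^sup>2 + (cmod c)\<^sup>2 = 1"
    using h1 by (metis complex_norm_square of_real_add of_real_eq_1_iff mult.commute complex_cnj_cnj)
  ultimately have "(cmod a)\<^sup>2 + (cmod b)\<^sup>2 * (cmod s ^ 2)\<^sup>2 = 1" by (simp add: power_mult_distrib ac_simps)
  then have "(cmod b)\<^sup>2 * ((cmod s ^ 2)\<^sup>2 - 1) = 0" using ab2 by algebra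
  moreover have "cmod b \<noteq> 0" using nz by auto
  ultimately have "(cmod s ^ 2)\<^sup>2 = 1" by simp
  then have "cmod s ^ 4 = 1 ^ 4" by simp
  then show "cmod s = 1" by (rule power_eq_imp_eq_base) auto
qed

fun uR :: "nat \<Rightarrow> real \<Rightarrow> real" where
  "uR 0 t = 0" | "uR (Suc 0) t = 1" | "uR (Suc (Suc n)) t = 2 * t * uR (Suc n) t - uR n t"

lemma chebU_real2: "chebU n (of_real t) = of_real (uR (Suc n) t) \<and> chebU (Suc n) (of_real t) = of_real (uR (Suc (Suc n)) t)"
  by (induction n) auto

lemma chebU_real: "chebU n (of_real t) = of_real (uR (Suc n) t)"
  using chebU_real2 by blast

lemma zetap_real: "zetap n (of_real t) = of_real (uR n t)"
  by (cases n) (auto simp: zetap_def chebU_real)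

lemma uR_cassini: "(uR (Suc n) t)\<^sup>2 - 2 * t * uR (Suc n) t * uR n t + (uR n t)\<^sup>2 = 1"
proof (induction n)
  case 0 then show ?case by simp
next
  case (Suc n) then show ?case by (simp add: algebra_simps power2_eq_square)
qed

lemma uR_sum: "M \<ge> 1 \<Longrightarrow> 4 * (t\<^sup>2 - 1) * (\<Sum>n<M. (uR (Suc n) t)\<^sup>2 + (uR n t)\<^sup>2)
   = (uR (M + 1) t)\<^sup>2 - (uR (M - 1) t)\<^sup>2 - 4 * real M"
proof (induction M rule: dec_induct)
  case base then show ?case by (simp add: algebra_simps power2_eq_square)
next
  case (step m)
  obtain k where k: "m = Suc k" using step by (cases m) auto
  have c: "(uR (Suc m) t)\<^sup>2 - 2 * t * uR (Suc m) t * uR m t + (uR m t)\<^sup>2 = 1" by (rule uR_cassini)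
  have r1: "uR (Suc (Suc m)) t = 2 * t * uR (Suc m) t - uR m t" by simp
  have r2: "uR (Suc m) t = 2 * t * uR m t - uR k t" using k by simp
  have e1: "uR (Suc m + 1) t = 2 * t * uR (Suc m) t - uR m t" by simp
  have e2: "uR (m - 1) t = 2 * t * uR m t - uR (Suc m) t" using r2 k by simp
  have e3: "uR (Suc m - 1) t = uR m t" by simp
  have IH: "4 * (t\<^sup>2 - 1) * (\<Sum>n<m. (uR (Suc n) t)\<^sup>2 + (uR n t)\<^sup>2)
   = (uR (m + 1) t)\<^sup>2 - (uR (m - 1) t)\<^sup>2 - 4 * real m" by (rule step.IH)
  show ?case unfolding lessThan_Suc_atMost[symmetric] sum.lessThan_Suc e1 e3 of_nat_Suc
    using IH c unfolding e2 Suc_eq_plus1[symmetric] by algebra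
qed

lemma uR_pm1: "t\<^sup>2 = 1 \<Longrightarrow> uR n t = t ^ (n + 1) * real n"
proof (induction n t rule: uR.induct)
  case (3 n t)
  have tt: "t * t = 1" using 3(3) by (simp add: power2_eq_square)
  have h: "uR (Suc n) t = t ^ (n + 2) * real (Suc n)" "uR n t = t ^ (n + 1) * real n" using 3 by auto
  have t3: "t ^ 3 = t" using tt by (simp add: power3_eq_cube)
  note h
  moreover note t3
  moreover have "t ^ (n + 3) = t ^ (n + 1)" using t3 by (simp add: power_add)
  moreover note tt
  ultimately show ?case by (simp add: algebra_simps power_add)
next
  case (2 t) then show ?case by (simp add: power2_eq_square)
next
  case (1 t) then show ?case by simp
qed



lemma algA:
  fixes a b s A w R U0 U1 :: complex
  assumes "a \<noteq> 0" "s \<noteq> 0" "A \<noteq> 0" "w \<noteq> 0"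
  shows "s * w * (R * (a / (s * A)) * U1 * b * A / (a * w)) = a * (R * U0 * b * A / (a * w)) + b * (R * (U1 - A * inverse w * U0))"
  using assms by (simp add: field_simps)

lemma algB:
  fixes a b s A w R U0 U1 U2 T ca cb :: complex
  assumes "a \<noteq> 0" "s \<noteq> 0" "A \<noteq> 0" "w \<noteq> 0" "ca * a = A^2" "cb * b = 1 - A^2"
    "U2 = T * U1 - U0" "T * A = w + inverse w"
  shows "s * w * (R * (U1 - A * inverse w * U0)) = (-(s^2) * cb) * (R * (a / (s * A)) * U1 * b * A / (a * w))
     + s^2 * ca * (R * (a / (s * A)) * (U2 - A * inverse w * U1))"
proof -
  have e: "inverse w = 1 / w" by (simp add: field_simps)
  have "T = (w + 1/w) / A" using assms(3,8) e by (simp add: field_simps)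
  then show ?thesis using assms unfolding e apply (simp add: field_simps) by algebra
qed

locale walk =
  fixes M :: nat and a b c d s \<omega> :: complex
  assumes M1: "M \<ge> 1" and uni: "unitary2 a b c d" and nz: "a * b * c * d \<noteq> 0"
    and sq: "s\<^sup>2 = a * d - b * c" and w1: "cmod \<omega> = 1"
begin

definition "A = cmod a"
definition "X = Re \<omega> / A"
definition "z = s * \<omega>"
definition "r = a / (s * of_real A)"
definition "Wp n = r ^ n * of_real (uR n X) * b * of_real A / (a * \<omega>)"
definition "Wq n = r ^ n * (of_real (uR (Suc n) X) - of_real A * inverse \<omega> * of_real (uR n X))"

lemma a0: "a \<noteq> 0" and b0: "b \<noteq> 0" and c0: "c \<noteq> 0" and d0: "d \<noteq> 0" using nz by auto
lemma cc: "c = - (s\<^sup>2) * cnj b" and dd: "d = s\<^sup>2 * cnj a" and AB: "(cmod a)\<^sup>2 + (cmod b)\<^sup>2 = 1"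
  and s1: "cmod s = 1"
  using unit_facts[OF uni nz sq] by auto
lemma s0: "s \<noteq> 0" using s1 by auto
lemma w0: "\<omega> \<noteq> 0" using w1 by auto
lemma Apos: "A > 0" using a0 by (simp add: A_def)
lemma z0: "z \<noteq> 0" using s0 w0 by (simp add: z_def)
lemma cz: "cmod z = 1" using s1 w1 by (simp add: z_def norm_mult)
lemma cr: "cmod r = 1" using s1 Apos by (simp add: r_def norm_divide norm_mult A_def)
lemma inv_w: "inverse \<omega> = cnj \<omega>" using divide_conv_cnj[OF w1, of 1] by (simp add: divide_inverse)
lemma TA: "of_real (2 * X) * of_real A = \<omega> + inverse \<omega>"
  using Apos unfolding inv_w X_def by (simp add: complex_add_cnj)

lemma recA: "z * Wp (Suc n) = a * Wp n + b * Wq n"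
  unfolding z_def Wp_def Wq_def power_Suc2
  using algA[OF a0 s0 _ w0, of "of_real A" "r ^ n" "of_real (uR (Suc n) X)" b "of_real (uR n X)"] Apos
  by (simp add: r_def mult.assoc)

lemma recB: "z * Wq n = c * Wp (Suc n) + d * Wq (Suc n)"
proof -
  have ca: "cnj a * a = of_real A ^ 2" using complex_norm_square[of a] by (simp add: A_def mult.commute)
  have cb: "cnj b * b = 1 - of_real A ^ 2" using complex_norm_square[of b] AB
    by (simp add: A_def mult.commute) (metis add_diff_cancel_left' of_real_1 of_real_add of_real_diff of_real_power)
  show ?thesis
    unfolding z_def Wp_def Wq_def power_Suc2 cc dd
    using algB[OF a0 s0 _ w0 ca cb, of "of_real (uR (Suc (Suc n)) X)" "of_real (2 * X)" "of_real (uR (Suc n) X)" "of_real (uR n X)" "r ^ n"] Apos TA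
    by (simp add: r_def mult.assoc)
qed

lemma nWp: "(cmod (Wp n))\<^sup>2 = (cmod b)\<^sup>2 * (uR n X)\<^sup>2"
  using cr w1 Apos a0 by (simp add: Wp_def norm_mult norm_divide norm_power A_def power_mult_distrib)

lemma nWq: "(cmod (Wq n))\<^sup>2 = A\<^sup>2 + (cmod b)\<^sup>2 * (uR (Suc n) X)\<^sup>2"
proof -
  define U0 where "U0 = uR n X"
  define U1 where "U1 = uR (Suc n) X"
  define Q where "Q = of_real U1 - of_real A * cnj \<omega> * of_real U0"
  have "cmod (Wq n) = cmod Q" using cr by (simp add: Wq_def Q_def U0_def U1_def inv_w norm_mult norm_power)
  moreover have "(cmod Q)\<^sup>2 = (U1 - A * Re \<omega> * U0)\<^sup>2 + (A * Im \<omega> * U0)\<^sup>2"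
    unfolding cmod_power2 Q_def by (simp add: power2_eq_square algebra_simps)
  moreover have "Re \<omega> = A * X" using Apos by (simp add: X_def)
  moreover have "(Im \<omega>)\<^sup>2 = 1 - (Re \<omega>)\<^sup>2" using w1 cmod_power2[of \<omega>] by simp
  moreover have "(cmod b)\<^sup>2 = 1 - A\<^sup>2" using AB by (simp add: A_def)
  moreover have "U1\<^sup>2 - 2 * X * U1 * U0 + U0\<^sup>2 = 1" unfolding U0_def U1_def by (rule uR_cassini)
  ultimately have "(cmod (Wq n))\<^sup>2 = (U1 - A * (A * X) * U0)\<^sup>2 + A\<^sup>2 * (1 - (A * X)\<^sup>2) * U0\<^sup>2"
    and cas: "U1\<^sup>2 - 2 * X * U1 * U0 + U0\<^sup>2 = 1" and bb: "(cmod b)\<^sup>2 = 1 - A\<^sup>2"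
    by (auto simp: power_mult_distrib)
  moreover have "(U1 - A * (A * X) * U0)\<^sup>2 + A\<^sup>2 * (1 - (A * X)\<^sup>2) * U0\<^sup>2 - (A\<^sup>2 + (1 - A\<^sup>2) * U1\<^sup>2)
     = A\<^sup>2 * ((U1\<^sup>2 - 2 * X * U1 * U0 + U0\<^sup>2) - 1)" by (simp add: algebra_simps power2_eq_square)
  ultimately show ?thesis unfolding U1_def[symmetric] bb by simp
qed

lemma Wq0: "Wq n \<noteq> 0"
proof
  assume "Wq n = 0"
  then have "A\<^sup>2 + (cmod b)\<^sup>2 * (uR (Suc n) X)\<^sup>2 = 0" using nWq[of n] by simp
  moreover have "(cmod b)\<^sup>2 * (uR (Suc n) X)\<^sup>2 \<ge> 0" by simp
  ultimately show False using Apos by (smt (verit) zero_less_power)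
qed

lemma Wp_0: "Wp 0 = 0" by (simp add: Wp_def)
lemma Wq_0: "Wq 0 = 1" by (simp add: Wq_def)


definition "v = 1 / (z * Wq (M - 1))"
definition "phi x = (if 0 \<le> x \<and> x < int M then (v * Wp (nat (int M - 1 - x)), v * Wq (nat (int M - 1 - x))) else (0, 0))"

lemma zv: "z * v * Wq (M - 1) = 1" using z0 Wq0 by (simp add: v_def)

lemma phi_sol: "is_sol M a b c d z phi"
  unfolding is_sol_def
proof (intro conjI ballI)
  show "lattice_fun M phi" by (auto simp: lattice_fun_def phi_def)
next
  fix x assume x: "x \<in> {0..<int M}"
  have E: "Eop M a b c d phi x = (a * fst (phi (x + 1)) + b * snd (phi (x + 1)),
            c * fst (phi (x - 1)) + d * snd (phi (x - 1)))" using x by (simp add: Eop_def)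
  have px: "phi x = (v * Wp (nat (int M - 1 - x)), v * Wq (nat (int M - 1 - x)))" using x by (simp add: phi_def)
  show "z * fst (phi x) - fst (Eop M a b c d phi x) = 0"
  proof (cases "x + 1 = int M")
    case True
    then have "nat (int M - 1 - x) = 0" by simp
    then show ?thesis using True by (simp add: E px phi_def Wp_0)
  next
    case False
    define k where "k = nat (int M - 1 - (x + 1))"
    have "0 \<le> int M - 1 - (x + 1)" using x False by auto
    then have "Suc k = nat (1 + (int M - 1 - (x + 1)))" unfolding k_def by (rule Suc_nat_eq_nat_zadd1)
    then have k: "nat (int M - 1 - x) = Suc k" by simp
    have "phi (x + 1) = (v * Wp k, v * Wq k)" using x False by (simp add: phi_def k_def)
    then have f2: "fst (Eop M a b c d phi x) = v * (a * Wp k + b * Wq k)" by (simp add: E algebra_simps)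
    have f1: "fst (phi x) = v * Wp (Suc k)" by (simp add: px k)
    have "z * (v * Wp (Suc k)) = v * (a * Wp k + b * Wq k)" using recA[of k] by (metis mult.left_commute)
    then show ?thesis unfolding f1 f2 by simp
  qed
  show "z * snd (phi x) - snd (Eop M a b c d phi x) = (if x = 0 then 1 else 0)"
  proof (cases "x = 0")
    case True
    have "nat (int M - 1 - x) = M - 1" using True M1 by simp
    have "snd (Eop M a b c d phi x) = 0" unfolding E using True by (simp add: phi_def)
    moreover have "z * snd (phi x) = 1" unfolding px using \<open>nat (int M - 1 - x) = M - 1\<close> zv by (simp add: mult.assoc)
    ultimately show ?thesis using True by simp
  next
    case False
    have "0 \<le> int M - 1 - x" using x by auto
    then have "Suc (nat (int M - 1 - x)) = nat (1 + (int M - 1 - x))" by (rule Suc_nat_eq_nat_zadd1)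
    then have k: "nat (int M - 1 - (x - 1)) = Suc (nat (int M - 1 - x))" by simp
    have "phi (x - 1) = (v * Wp (Suc (nat (int M - 1 - x))), v * Wq (Suc (nat (int M - 1 - x))))"
      using x False k by (simp add: phi_def)
    define n where "n = nat (int M - 1 - x)"
    have f2: "snd (Eop M a b c d phi x) = v * (c * Wp (Suc n) + d * Wq (Suc n))"
      unfolding E \<open>phi (x - 1) = _\<close> n_def[symmetric] by (simp add: algebra_simps)
    have f1: "snd (phi x) = v * Wq n" by (simp add: px n_def)
    have "z * (v * Wq n) = v * (c * Wp (Suc n) + d * Wq (Suc n))" using recB[of n] by (metis mult.left_commute)
    then show ?thesis unfolding f1 f2 using False by simp
  qed
qed

lemma sol_unique:
  assumes "is_sol M a b c d z \<psi>" shows "\<psi> = phi"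
proof -
  have lf: "\<And>x. x < 0 \<or> x \<ge> int M \<Longrightarrow> \<psi> x = (0, 0)" using assms by (auto simp: is_sol_def lattice_fun_def)
  have eqs: "\<And>x. 0 \<le> x \<Longrightarrow> x < int M \<Longrightarrow>
        z * fst (\<psi> x) = a * fst (\<psi> (x + 1)) + b * snd (\<psi> (x + 1)) \<and>
        z * snd (\<psi> x) - (c * fst (\<psi> (x - 1)) + d * snd (\<psi> (x - 1))) = (if x = 0 then 1 else 0)"
    using assms by (auto simp: is_sol_def Eop_def)
  define \<kappa> where "\<kappa> = snd (\<psi> (int M - 1))"
  have main: "k < M \<Longrightarrow> \<psi> (int M - 1 - int k) = (\<kappa> * Wp k, \<kappa> * Wq k)" for k
  proof (induction k)
    case 0
    have "z * fst (\<psi> (int M - 1)) = 0" using eqs[of "int M - 1"] lf[of "int M"] M1 by simp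
    then show ?case using z0 by (simp add: Wp_0 Wq_0 \<kappa>_def prod_eq_iff)
  next
    case (Suc k)
    define x where "x = int M - 1 - int (Suc k)"
    have x0: "0 \<le> x" "x + 1 < int M" using Suc.prems by (auto simp: x_def)
    have IH: "\<psi> (x + 1) = (\<kappa> * Wp k, \<kappa> * Wq k)" using Suc by (simp add: x_def algebra_simps)
    have e1: "z * fst (\<psi> x) = z * (\<kappa> * Wp (Suc k))" using eqs[of x] x0 IH recA[of k] by (simp add: algebra_simps)
    have "z * snd (\<psi> (x + 1)) - (c * fst (\<psi> x) + d * snd (\<psi> x)) = 0" using eqs[of "x + 1"] x0 by simp
    then have "d * snd (\<psi> x) = d * (\<kappa> * Wq (Suc k))" using IH recB[of k] e1 z0
      by (simp add: algebra_simps) (metis (no_types, lifting) add_diff_cancel_left' mult.commute mult.left_commute mult_cancel_left)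
    then show ?case using e1 z0 d0 by (simp add: x_def prod_eq_iff)
  qed
  have "z * snd (\<psi> 0) = 1" using eqs[of 0] lf[of "-1"] M1 by simp
  moreover have "\<psi> 0 = (\<kappa> * Wp (M - 1), \<kappa> * Wq (M - 1))" using main[of "M - 1"] M1 by (simp add: of_nat_diff)
  ultimately have "\<kappa> = v" using z0 Wq0 by (simp add: v_def field_simps)
  show ?thesis
  proof
    fix x
    show "\<psi> x = phi x"
    proof (cases "0 \<le> x \<and> x < int M")
      case True
      define k where "k = nat (int M - 1 - x)"
      have "k < M" "x = int M - 1 - int k" using True by (auto simp: k_def)
      then have "\<psi> x = (v * Wp k, v * Wq k)" using main[of k] \<open>\<kappa> = v\<close> by simp
      moreover have "phi x = (v * Wp k, v * Wq k)" using True unfolding phi_def k_def by simp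
      ultimately show ?thesis by simp
    next
      case False then show ?thesis using lf[of x] by (auto simp: phi_def)
    qed
  qed
qed

lemma the_sol: "(THE \<psi>. is_sol M a b c d z \<psi>) = phi"
  using phi_sol sol_unique by (rule the_equality)

lemma energy_formula:
  "energy M a b c d z = (real M * A\<^sup>2 + (cmod b)\<^sup>2 * (\<Sum>n<M. (uR (Suc n) X)\<^sup>2 + (uR n X)\<^sup>2))
      / (A\<^sup>2 + (cmod b)\<^sup>2 * (uR M X)\<^sup>2)"
proof -
  define D where "D = A\<^sup>2 + (cmod b)\<^sup>2 * (uR M X)\<^sup>2"
  have D: "(cmod (Wq (M - 1)))\<^sup>2 = D" using nWq[of "M - 1"] M1 by (simp add: D_def)
  have Dp: "D > 0" using Apos by (simp add: D_def add_pos_nonneg)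
  have cv: "(cmod v)\<^sup>2 = 1 / D" using cz D by (simp add: v_def norm_divide norm_mult power_divide power_mult_distrib)
  have "energy M a b c d z = (\<Sum>x\<in>{0..<int M}. (cmod (fst (phi x)))\<^sup>2 + (cmod (snd (phi x)))\<^sup>2)"
    by (simp add: energy_def the_sol Let_def)
  also have "\<dots> = (\<Sum>k<M. (cmod v)\<^sup>2 * ((cmod (Wp k))\<^sup>2 + (cmod (Wq k))\<^sup>2))"
  proof (rule sum.reindex_bij_witness[where i = "\<lambda>k. int M - 1 - int k" and j = "\<lambda>x. nat (int M - 1 - x)"])
    fix x assume x: "x \<in> {0..<int M}"
    then show "int M - 1 - int (nat (int M - 1 - x)) = x" by auto
    show "nat (int M - 1 - x) \<in> {..<M}" using x by auto
    show "(cmod v)\<^sup>2 * ((cmod (Wp (nat (int M - 1 - x))))\<^sup>2 + (cmod (Wq (nat (int M - 1 - x))))\<^sup>2) =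
        (cmod (fst (phi x)))\<^sup>2 + (cmod (snd (phi x)))\<^sup>2"
      using x by (simp add: phi_def norm_mult power_mult_distrib algebra_simps)
  next
    fix k assume k: "k \<in> {..<M}"
    then show "nat (int M - 1 - (int M - 1 - int k)) = k" by auto
    show "int M - 1 - int k \<in> {0..<int M}" using k by auto
  qed
  also have "\<dots> = (\<Sum>k<M. (A\<^sup>2 + (cmod b)\<^sup>2 * ((uR (Suc k) X)\<^sup>2 + (uR k X)\<^sup>2)) / D)"
    by (rule sum.cong) (simp_all add: cv nWp nWq algebra_simps add_divide_distrib)
  also have "\<dots> = (real M * A\<^sup>2 + (cmod b)\<^sup>2 * (\<Sum>n<M. (uR (Suc n) X)\<^sup>2 + (uR n X)\<^sup>2)) / D"
    by (simp add: sum_divide_distrib[symmetric] sum.distrib sum_distrib_left[symmetric])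
  finally show ?thesis by (simp add: D_def)
qed

lemma xw_X: "xw a \<omega> = of_real X"
proof -
  have "xw a \<omega> = of_real (2 * X) * of_real A / (2 * of_real A)" unfolding xw_def TA by (simp add: A_def)
  then show ?thesis using Apos by simp
qed

lemma energy_X: "energy M a b c d (s * \<omega>) = (real M * (cmod a)\<^sup>2 + (cmod b)\<^sup>2 * (\<Sum>n<M. (uR (Suc n) X)\<^sup>2 + (uR n X)\<^sup>2))
      / ((cmod a)\<^sup>2 + (cmod b)\<^sup>2 * (uR M X)\<^sup>2)"
  using energy_formula by (simp add: z_def A_def)

end


lemma cont_uR: "continuous_on S f \<Longrightarrow> continuous_on S (\<lambda>x. uR n (f x)) \<and> continuous_on S (\<lambda>x. uR (Suc n) (f x))"
proof (induction n)
  case 0 then show ?case by (simp add: continuous_on_const)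
next
  case (Suc n) then show ?case by (auto intro!: continuous_intros)
qed

lemma sum_sq: "(\<Sum>n<M. (real (Suc n))\<^sup>2 + (real n)\<^sup>2) = real M * (2 * (real M)\<^sup>2 + 1) / 3"
  by (induction M) (simp_all add: field_simps power2_eq_square)

theorem mainTheorem7:
  fixes M :: nat and a b c d s :: complex
  assumes "M \<ge> 1"
    and "unitary2 a b c d"
    and "a * b * c * d \<noteq> 0"
    and "s\<^sup>2 = a * d - b * c"
  shows "(\<forall>\<omega>. cmod \<omega> = 1 \<and> \<omega> \<notin> dB a \<longrightarrow>
            (let x = xw a \<omega> in
             complex_of_real (energy M a b c d (s * \<omega>)) =
               1 / ((cmod a)\<^sup>2 + (cmod b)\<^sup>2 * (zetap M x)\<^sup>2) *
               (of_nat M * (cmod a)\<^sup>2 +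
                (cmod b)\<^sup>2 / (4 * (x\<^sup>2 - 1)) *
                ((zetap (M + 1) x)\<^sup>2 - (zetap (M - 1) x)\<^sup>2 - 4 * of_nat M))))
       \<and> (\<forall>\<omega>. cmod \<omega> = 1 \<and> \<omega> \<in> dB a \<longrightarrow>
            energy M a b c d (s * \<omega>) =
              real M / 3 * ((3 * (cmod a)\<^sup>2 + (cmod b)\<^sup>2 + 2 * (cmod b)\<^sup>2 * (real M)\<^sup>2)
                            / ((cmod a)\<^sup>2 + (cmod b)\<^sup>2 * (real M)\<^sup>2))
            \<and> continuous (at \<omega> within sphere 0 1) (\<lambda>w. energy M a b c d (s * w)))"
proof -
  define Aa where "Aa = cmod a"
  define Bb where "Bb = cmod b"
  define G where "G t = (real M * Aa\<^sup>2 + Bb\<^sup>2 * (\<Sum>n<M. (uR (Suc n) t)\<^sup>2 + (uR n t)\<^sup>2))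
      / (Aa\<^sup>2 + Bb\<^sup>2 * (uR M t)\<^sup>2)" for t
  have AB: "Aa\<^sup>2 + Bb\<^sup>2 = 1" using unit_facts[OF assms(2,3,4)] by (simp add: Aa_def Bb_def)
  have Apos: "Aa > 0" using assms(3) by (auto simp: Aa_def)
  have Dpos: "Aa\<^sup>2 + Bb\<^sup>2 * (uR M t)\<^sup>2 > 0" for t using Apos by (simp add: add_pos_nonneg)
  have key: "energy M a b c d (s * \<omega>) = G (Re \<omega> / Aa) \<and> xw a \<omega> = of_real (Re \<omega> / Aa)"
    if w: "cmod \<omega> = 1" for \<omega>
  proof -
    note AAdef = Aa_def and BBdef = Bb_def
    interpret walk M a b c d s \<omega> using assms w by unfold_locales
    show ?thesis using energy_X xw_X by (simp add: G_def X_def Aa_def Bb_def A_def)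
  qed
  show ?thesis
  proof (intro conjI allI impI)
    fix \<omega> assume w: "cmod \<omega> = 1 \<and> \<omega> \<notin> dB a"
    define t where "t = Re \<omega> / Aa"
    have k: "energy M a b c d (s * \<omega>) = G t" "xw a \<omega> = of_real t" using key w by (auto simp: t_def)
    have "\<bar>t\<bar> \<noteq> 1" using w k(2) by (auto simp: dB_def)
    then have t2: "t\<^sup>2 - 1 \<noteq> 0" by (metis abs_power2 power2_eq_1_iff right_minus_eq abs_neg_one abs_one)
    have S: "(\<Sum>n<M. (uR (Suc n) t)\<^sup>2 + (uR n t)\<^sup>2) = ((uR (M + 1) t)\<^sup>2 - (uR (M - 1) t)\<^sup>2 - 4 * real M) / (4 * (t\<^sup>2 - 1))"
      using uR_sum[OF assms(1), of t] t2 by (simp add: eq_divide_eq mult.commute)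
    have R: "G t = 1 / (Aa\<^sup>2 + Bb\<^sup>2 * (uR M t)\<^sup>2) * (real M * Aa\<^sup>2 + Bb\<^sup>2 / (4 * (t\<^sup>2 - 1)) * ((uR (M + 1) t)\<^sup>2 - (uR (M - 1) t)\<^sup>2 - 4 * real M))"
      unfolding G_def S by simp
    show "let x = xw a \<omega> in
             complex_of_real (energy M a b c d (s * \<omega>)) =
               1 / ((cmod a)\<^sup>2 + (cmod b)\<^sup>2 * (zetap M x)\<^sup>2) *
               (of_nat M * (cmod a)\<^sup>2 +
                (cmod b)\<^sup>2 / (4 * (x\<^sup>2 - 1)) *
                ((zetap (M + 1) x)\<^sup>2 - (zetap (M - 1) x)\<^sup>2 - 4 * of_nat M))"
      unfolding Let_def k zetap_real R by (simp add: Aa_def Bb_def)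
  next
    fix \<omega> assume w: "cmod \<omega> = 1 \<and> \<omega> \<in> dB a"
    define t where "t = Re \<omega> / Aa"
    have k: "energy M a b c d (s * \<omega>) = G t" "xw a \<omega> = of_real t" using key w by (auto simp: t_def)
    have "\<bar>t\<bar> = 1" using w k(2) by (auto simp: dB_def)
    then have t2: "t\<^sup>2 = 1" by (metis abs_power2 power2_abs power_one)
    have u2: "(uR n t)\<^sup>2 = (real n)\<^sup>2" for n
      using uR_pm1[OF t2, of n] t2 by (simp add: power_mult_distrib power_even_eq[symmetric] power_mult[symmetric]
          flip: power_mult) (metis mult.commute power_mult power_one t2)
    show "energy M a b c d (s * \<omega>) =
              real M / 3 * ((3 * (cmod a)\<^sup>2 + (cmod b)\<^sup>2 + 2 * (cmod b)\<^sup>2 * (real M)\<^sup>2)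
                            / ((cmod a)\<^sup>2 + (cmod b)\<^sup>2 * (real M)\<^sup>2))"
      unfolding k G_def u2 sum_sq using AB by (simp add: Aa_def Bb_def field_simps)
  next
    fix \<omega> assume w: "cmod \<omega> = 1 \<and> \<omega> \<in> dB a"
    have c1: "continuous_on UNIV (\<lambda>w. uR n (Re w / Aa))" for n
    proof -
      have "continuous_on UNIV (\<lambda>w. Re w / Aa)" using Apos by (intro continuous_intros) auto
      then show ?thesis using cont_uR[of UNIV "\<lambda>w. Re w / Aa" n] by blast
    qed
    have "continuous_on UNIV (\<lambda>w. G (Re w / Aa))"
      unfolding G_def using Dpos
      by (intro continuous_intros c1) (metis Dpos less_irrefl)
    then have "continuous (at \<omega> within sphere 0 1) (\<lambda>w. G (Re w / Aa))"
      by (simp add: continuous_on_eq_continuous_at continuous_at_imp_continuous_at_within)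
    then show "continuous (at \<omega> within sphere 0 1) (\<lambda>w. energy M a b c d (s * w))"
      by (rule continuous_transform_within[where \<delta> = 1]) (use w key in auto)
  qed
qed

end
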